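(* Let $1\le k\le n$ and $\rho=\sum_{i=0}^k\lambda_i|D_n^i\rangle\langle D_n^i|$ with $\lambda_i\ge0$, $\sum_{i=0}^k\lambda_i=1$. If there exists $i_*\in\{0,\dots,k\}$ such that $k-i_*$ is even and $\lambda_{i_*}=0$, then $L(\rho)\le k$.
   Context: Dicke states: $|D_n^i\rangle=\binom{n}{i}^{-1/2}\sum_{s\in\{0,1\}^n,\ \sum_js_j=i}|s_1\rangle\otimes\cdots\otimes|s_n\rangle$. For $S\subseteq[n]$, $\rho_S$ is the partial trace of $\rho$ over qubits outside $S$; $\mathcal C(\rho,\mathcal S)=\{\sigma\text{ density matrix}:\sigma_S=\rho_S\ \forall S\in\mathcal S\}$; $\mathcal S$ determines $\rho$ if $\mathcal C(\rho,\mathcal S)=\{\rho\}$; $L(\rho)=\min_{\mathcal S\text{ determines }\rho}\max_{S\in\mathcal S}|S|$. *)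

theory Defs
  imports Complex_Main
begin

text \<open>n-qubit computational basis states are encoded as bit assignments
  s :: nat \<Rightarrow> bool with s j = False for j \<ge> n (qubits are 0,...,n-1).
  An operator on n qubits is a function rho :: basis \<Rightarrow> basis \<Rightarrow> complex
  (matrix entries), required to vanish outside the basis.\<close>

type_synonym bits = "nat \<Rightarrow> bool"
type_synonym qop = "bits \<Rightarrow> bits \<Rightarrow> complex"

definition asg :: "nat set \<Rightarrow> bits set" where
  "asg S = {x. \<forall>j. x j \<longrightarrow> j \<in> S}"

abbreviation basis :: "nat \<Rightarrow> bits set" where
  "basis n \<equiv> asg {0..<n}"

definition density :: "nat \<Rightarrow> qop \<Rightarrow> bool" where
  "density n \<sigma> \<longleftrightarrow>
     (\<forall>s t. (s \<notin> basis n \<or> t \<notin> basis n) \<longrightarrow> \<sigma> s t = 0) \<and>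
     (\<forall>v :: bits \<Rightarrow> complex.
        let q = (\<Sum>s\<in>basis n. \<Sum>t\<in>basis n. cnj (v s) * \<sigma> s t * v t)
        in Im q = 0 \<and> Re q \<ge> 0) \<and>
     (\<Sum>s\<in>basis n. \<sigma> s s) = 1"

definition merge :: "nat set \<Rightarrow> bits \<Rightarrow> bits \<Rightarrow> bits" where
  "merge S x c = (\<lambda>j. if j \<in> S then x j else c j)"

definition ptrace :: "nat \<Rightarrow> nat set \<Rightarrow> qop \<Rightarrow> qop" where
  "ptrace n S \<sigma> x y = (\<Sum>c\<in>asg ({0..<n} - S). \<sigma> (merge S x c) (merge S y c))"

definition same_marginal :: "nat \<Rightarrow> nat set \<Rightarrow> qop \<Rightarrow> qop \<Rightarrow> bool" where
  "same_marginal n S \<sigma> \<rho> \<longleftrightarrow>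
     (\<forall>x\<in>asg S. \<forall>y\<in>asg S. ptrace n S \<sigma> x y = ptrace n S \<rho> x y)"

definition compatible :: "nat \<Rightarrow> qop \<Rightarrow> nat set set \<Rightarrow> qop set" where
  "compatible n \<rho> \<S> = {\<sigma>. density n \<sigma> \<and> (\<forall>S\<in>\<S>. same_marginal n S \<sigma> \<rho>)}"

definition determines :: "nat \<Rightarrow> nat set set \<Rightarrow> qop \<Rightarrow> bool" where
  "determines n \<S> \<rho> \<longleftrightarrow> compatible n \<rho> \<S> = {\<rho>}"

text \<open>L(rho): minimum over determining families of subsets of [n] of the
  maximal subset size (max over the empty family taken as 0).\<close>
definition Lmin :: "nat \<Rightarrow> qop \<Rightarrow> nat" where
  "Lmin n \<rho> = (LEAST m. \<exists>\<S>. (\<forall>S\<in>\<S>. S \<subseteq> {0..<n}) \<and> determines n \<S> \<rho> \<and>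
                           (\<forall>S\<in>\<S>. card S \<le> m))"

definition dicke :: "nat \<Rightarrow> nat \<Rightarrow> bits \<Rightarrow> complex" where
  "dicke n i s = (if s \<in> basis n \<and> card {j. j < n \<and> s j} = i
                  then complex_of_real (1 / sqrt (real (n choose i))) else 0)"

definition dicke_mix :: "nat \<Rightarrow> nat \<Rightarrow> (nat \<Rightarrow> real) \<Rightarrow> qop" where
  "dicke_mix n k lam s t =
     (\<Sum>i\<in>{0..k}. complex_of_real (lam i) * dicke n i s * cnj (dicke n i t))"

end

theory Submission
  imports Defs
begin



lemma asg_eq: "asg S = (\<lambda>T j. j \<in> T) ` Pow S"
proof (rule set_eqI, rule iffI)
  fix x assume "x \<in> asg S"
  then have "x = (\<lambda>j. j \<in> {j. x j})" "{j. x j} \<subseteq> S" by (auto simp: asg_def)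
  then show "x \<in> (\<lambda>T j. j \<in> T) ` Pow S" by blast
qed (auto simp: asg_def)

lemma finite_asg: "finite S \<Longrightarrow> finite (asg S)"
  by (simp add: asg_eq)

lemma finite_basis: "finite (basis n)" by (simp add: finite_asg)

definition wt :: "nat \<Rightarrow> bits \<Rightarrow> nat" where "wt n s = card {j. j < n \<and> s j}"
definition ev :: "nat \<Rightarrow> bits" where "ev a = (\<lambda>j. j < a)"
definition bil :: "nat \<Rightarrow> qop \<Rightarrow> (bits \<Rightarrow> complex) \<Rightarrow> (bits \<Rightarrow> complex) \<Rightarrow> complex" where
  "bil n X v w = (\<Sum>s\<in>basis n. \<Sum>t\<in>basis n. cnj (v s) * X s t * w t)"
definition qf :: "nat \<Rightarrow> qop \<Rightarrow> (bits \<Rightarrow> complex) \<Rightarrow> complex" where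
  "qf n X v = bil n X v v"
definition dl :: "bits \<Rightarrow> bits \<Rightarrow> complex" where "dl t = (\<lambda>s. if s = t then 1 else 0)"

lemma density_qf: "density n X \<Longrightarrow> Im (qf n X v) = 0 \<and> Re (qf n X v) \<ge> 0"
  unfolding density_def qf_def bil_def Let_def by blast

lemma density_zero: "density n X \<Longrightarrow> s \<notin> basis n \<or> t \<notin> basis n \<Longrightarrow> X s t = 0"
  unfolding density_def by blast

lemma sum_dl_right: "finite A \<Longrightarrow> (\<Sum>t\<in>A. f t * dl u t) = (if u \<in> A then f u else 0)"
proof -
  assume "finite A"
  have "\<And>t. f t * dl u t = (if t = u then f u else 0)" by (simp add: dl_def)
  then show ?thesis using \<open>finite A\<close> by simp
qed

lemma sum_dl_left: "finite A \<Longrightarrow> (\<Sum>t\<in>A. cnj (dl u t) * f t) = (if u \<in> A then f u else 0)"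
proof -
  assume "finite A"
  have "\<And>t. cnj (dl u t) * f t = (if t = u then f u else 0)" by (simp add: dl_def)
  then show ?thesis using \<open>finite A\<close> by simp
qed

lemma bil_dl: "t \<in> basis n \<Longrightarrow> u \<in> basis n \<Longrightarrow> bil n X (dl t) (dl u) = X t u"
proof -
  assume a: "t \<in> basis n" "u \<in> basis n"
  have "bil n X (dl t) (dl u) = (\<Sum>s\<in>basis n. cnj (dl t s) * (\<Sum>ta\<in>basis n. X s ta * dl u ta))"
    unfolding bil_def by (simp add: sum_distrib_left mult.assoc)
  also have "\<dots> = (\<Sum>s\<in>basis n. cnj (dl t s) * X s u)"
    using a by (simp add: sum_dl_right finite_basis)
  also have "\<dots> = X t u" using a by (simp add: sum_dl_left finite_basis)
  finally show ?thesis .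
qed

lemma bil_diff_left: "bil n X (\<lambda>s. a s - b s) w = bil n X a w - bil n X b w"
  unfolding bil_def by (simp add: algebra_simps sum_subtractf)
lemma bil_diff_right: "bil n X v (\<lambda>s. a s - b s) = bil n X v a - bil n X v b"
  unfolding bil_def by (simp add: algebra_simps sum_subtractf)

lemma qf_delta: "s \<in> basis n \<Longrightarrow> qf n X (dl s) = X s s"
  by (simp add: qf_def bil_dl)

lemma qf_delta2:
  assumes "t \<in> basis n" "u \<in> basis n"
  shows "qf n X (\<lambda>s. dl t s - dl u s) = X t t + X u u - X t u - X u t"
  using assms by (simp add: qf_def bil_diff_left bil_diff_right bil_dl)

lemma mul_delta2:
  assumes "t \<in> basis n" "u \<in> basis n"
  shows "(\<Sum>t'\<in>basis n. X s t' * (dl t t' - dl u t')) = X s t - X s u"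
  using assms by (simp add: right_diff_distrib sum_subtractf sum_dl_right finite_basis)

lemma bil_add_left: "bil n X (\<lambda>s. a s + b s) w = bil n X a w + bil n X b w"
  unfolding bil_def by (simp add: algebra_simps sum.distrib)
lemma bil_add_right: "bil n X v (\<lambda>s. a s + b s) = bil n X v a + bil n X v b"
  unfolding bil_def by (simp add: algebra_simps sum.distrib)
lemma bil_scale_left: "bil n X (\<lambda>s. c * a s) w = cnj c * bil n X a w"
  unfolding bil_def by (simp add: algebra_simps sum_distrib_left)
lemma bil_scale_right: "bil n X v (\<lambda>s. c * a s) = c * bil n X v a"
  unfolding bil_def by (simp add: algebra_simps sum_distrib_left)

lemma herm:
  assumes d: "density n X"
  shows "X s t = cnj (X t s)"
proof (cases "s \<in> basis n \<and> t \<in> basis n")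
  case False then show ?thesis using density_zero[OF d] by auto
next
  case True
  then have sB: "s \<in> basis n" and tB: "t \<in> basis n" by auto
  have rs: "Im (X s s) = 0" using density_qf[OF d, of "dl s"] qf_delta[OF sB] by simp
  have rt: "Im (X t t) = 0" using density_qf[OF d, of "dl t"] qf_delta[OF tB] by simp
  have q1: "qf n X (\<lambda>x. dl s x + dl t x) = X s s + X s t + X t s + X t t"
    using sB tB by (simp add: qf_def bil_add_left bil_add_right bil_dl)
  have q2: "qf n X (\<lambda>x. dl s x + \<i> * dl t x) = X s s + \<i> * X s t - \<i> * X t s + X t t"
    using sB tB by (simp add: qf_def bil_add_left bil_add_right bil_dl bil_scale_left bil_scale_right)
  have i1: "Im (X s t) + Im (X t s) = 0"
    using density_qf[OF d, of "\<lambda>x. dl s x + dl t x"] q1 rs rt by simp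
  have i2: "Re (X s t) - Re (X t s) = 0"
    using density_qf[OF d, of "\<lambda>x. dl s x + \<i> * dl t x"] q2 rs rt by simp
  show ?thesis using i1 i2 by (intro complex_eqI) auto
qed

lemma bil_herm: assumes d: "density n X" shows "bil n X v w = cnj (bil n X w v)"
proof -
  have "cnj (bil n X w v) = (\<Sum>s\<in>basis n. \<Sum>t\<in>basis n. w s * cnj (X s t) * cnj (v t))"
    unfolding bil_def by (simp add: cnj_sum)
  also have "\<dots> = (\<Sum>s\<in>basis n. \<Sum>t\<in>basis n. cnj (v t) * X t s * w s)"
  proof (rule sum.cong[OF refl], rule sum.cong[OF refl])
    fix s t show "w s * cnj (X s t) * cnj (v t) = cnj (v t) * X t s * w s"
      using herm[OF d, of t s] by (simp add: mult.commute mult.left_commute)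
  qed
  also have "\<dots> = bil n X v w" unfolding bil_def by (rule sum.swap)
  finally show ?thesis by simp
qed

lemma kernel:
  assumes d: "density n X" and q0: "qf n X v = 0" and sB: "s \<in> basis n"
  shows "(\<Sum>t\<in>basis n. X s t * v t) = 0"
proof -
  define \<alpha> where "\<alpha> = (\<lambda>s. \<Sum>t\<in>basis n. X s t * v t)"
  define A where "A = (\<Sum>s\<in>basis n. (cmod (\<alpha> s))\<^sup>2)"
  define C where "C = Re (qf n X \<alpha>)"
  have C0: "C \<ge> 0" using density_qf[OF d] C_def by simp
  have A0: "A \<ge> 0" unfolding A_def by (simp add: sum_nonneg)
  have b1: "bil n X \<alpha> v = of_real A"
  proof -
    have "bil n X \<alpha> v = (\<Sum>s\<in>basis n. cnj (\<alpha> s) * \<alpha> s)"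
      unfolding bil_def \<alpha>_def by (simp add: sum_distrib_left mult.assoc)
    also have "\<dots> = (\<Sum>s\<in>basis n. of_real ((cmod (\<alpha> s))\<^sup>2))"
      by (rule sum.cong[OF refl]) (metis complex_norm_square mult.commute)
    finally show ?thesis by (simp add: A_def)
  qed
  have b2: "bil n X v \<alpha> = of_real A" using bil_herm[OF d, of v \<alpha>] b1 by simp
  have key: "\<And>\<epsilon>::real. \<epsilon> > 0 \<Longrightarrow> 2 * \<epsilon> * A \<le> \<epsilon>\<^sup>2 * C"
  proof -
    fix \<epsilon> :: real assume "\<epsilon> > 0"
    let ?x = "\<lambda>s. (- of_real \<epsilon>) * \<alpha> s"
    have "qf n X (\<lambda>s. v s + ?x s) = qf n X v + bil n X v ?x + bil n X ?x v + qf n X ?x"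
      unfolding qf_def bil_add_left bil_add_right by (simp add: add.assoc)
    also have "\<dots> = - of_real \<epsilon> * of_real A - of_real \<epsilon> * of_real A + of_real (\<epsilon>\<^sup>2) * qf n X \<alpha>"
      using q0 b1 b2 unfolding qf_def bil_scale_left bil_scale_right by (simp add: power2_eq_square)
    finally have "Re (qf n X (\<lambda>s. v s + ?x s)) = - 2 * \<epsilon> * A + \<epsilon>\<^sup>2 * C"
      by (simp add: C_def)
    then show "2 * \<epsilon> * A \<le> \<epsilon>\<^sup>2 * C" using density_qf[OF d, of "\<lambda>s. v s + ?x s"] by simp
  qed
  have "A = 0"
  proof (rule ccontr)
    assume "A \<noteq> 0" then have Ap: "A > 0" using A0 by simp
    define \<epsilon> where "\<epsilon> = A / (C + 1)"
    have ep: "\<epsilon> > 0" using Ap C0 by (simp add: \<epsilon>_def)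
    have "2 * \<epsilon> * A \<le> \<epsilon>\<^sup>2 * C" using key[OF ep] .
    then have "2 * A \<le> \<epsilon> * C" using ep by (simp add: power2_eq_square)
    moreover have "\<epsilon> * C < A" using Ap C0 by (simp add: \<epsilon>_def field_simps)
    ultimately show False using Ap by simp
  qed
  then have "\<forall>s\<in>basis n. (cmod (\<alpha> s))\<^sup>2 = 0"
    using sum_nonneg_eq_0_iff[OF finite_basis[of n], where f="\<lambda>s. (cmod (\<alpha> s))\<^sup>2"] A_def by simp
  then show ?thesis using sB \<alpha>_def by simp
qed



lemma sum_merge:
  assumes S: "S \<subseteq> {0..<n}" and x: "x \<in> asg S"
  shows "(\<Sum>c\<in>asg ({0..<n} - S). G (merge S x c)) = (\<Sum>s\<in>{s\<in>basis n. \<forall>j\<in>S. s j = x j}. G s)"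
proof (rule sum.reindex_bij_witness[where j="merge S x" and i="\<lambda>s j. j \<notin> S \<and> s j"])
  fix c assume c: "c \<in> asg ({0..<n} - S)"
  then have c': "\<And>j. c j \<Longrightarrow> j < n \<and> j \<notin> S" unfolding asg_def by auto
  show "(\<lambda>j. j \<notin> S \<and> merge S x c j) = c"
  proof (rule ext)
    fix j show "(j \<notin> S \<and> merge S x c j) = c j" using c'[of j] unfolding merge_def by auto
  qed
  have x': "\<And>j. x j \<Longrightarrow> j \<in> S" using x unfolding asg_def by auto
  have "\<forall>j. merge S x c j \<longrightarrow> j \<in> {0..<n}"
  proof (intro allI impI)
    fix j assume "merge S x c j"
    then have "(j \<in> S \<and> x j) \<or> (j \<notin> S \<and> c j)" unfolding merge_def by (simp split: if_splits)
    then show "j \<in> {0..<n}" using c'[of j] S by (meson atLeastLessThan_iff le0 subsetD)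
  qed
  moreover have "\<forall>j\<in>S. merge S x c j = x j" unfolding merge_def by simp
  ultimately show "merge S x c \<in> {s\<in>basis n. \<forall>j\<in>S. s j = x j}" unfolding asg_def by simp
next
  fix s assume s: "s \<in> {s\<in>basis n. \<forall>j\<in>S. s j = x j}"
  then have s1: "\<And>j. s j \<Longrightarrow> j < n" and s2: "\<And>j. j \<in> S \<Longrightarrow> s j = x j" unfolding asg_def by auto
  show "merge S x (\<lambda>j. j \<notin> S \<and> s j) = s"
  proof (rule ext)
    fix j show "merge S x (\<lambda>j. j \<notin> S \<and> s j) j = s j" using s2[of j] unfolding merge_def by auto
  qed
  have "\<forall>j. (j \<notin> S \<and> s j) \<longrightarrow> j \<in> {0..<n} - S" using s1 by simp
  then show "(\<lambda>j. j \<notin> S \<and> s j) \<in> asg ({0..<n} - S)" unfolding asg_def by simp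
qed simp

lemma ptrace_alt:
  assumes S: "S \<subseteq> {0..<n}" and x: "x \<in> asg S"
  shows "ptrace n S X x y = (\<Sum>s\<in>{s\<in>basis n. \<forall>j\<in>S. s j = x j}. X s (merge S y s))"
proof -
  have "ptrace n S X x y = (\<Sum>c\<in>asg ({0..<n} - S). (\<lambda>s. X s (merge S y s)) (merge S x c))"
    unfolding ptrace_def by (rule sum.cong) (auto simp: merge_def)
  then show ?thesis using sum_merge[OF S x] by simp
qed

lemma ptrace_diag:
  assumes T: "T \<subseteq> {0..<n}"
  shows "ptrace n T X (\<lambda>j. j \<in> T) (\<lambda>j. j \<in> T) = (\<Sum>s\<in>{s\<in>basis n. T \<subseteq> {j. s j}}. X s s)"
proof -
  have x: "(\<lambda>j. j \<in> T) \<in> asg T" by (simp add: asg_def)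
  have "ptrace n T X (\<lambda>j. j \<in> T) (\<lambda>j. j \<in> T) = (\<Sum>s\<in>{s\<in>basis n. \<forall>j\<in>T. s j = (j \<in> T)}. X s (merge T (\<lambda>j. j \<in> T) s))"
    by (rule ptrace_alt[OF T x])
  also have "\<dots> = (\<Sum>s\<in>{s\<in>basis n. T \<subseteq> {j. s j}}. X s s)"
  proof (rule sum.cong)
    show "{s\<in>basis n. \<forall>j\<in>T. s j = (j \<in> T)} = {s\<in>basis n. T \<subseteq> {j. s j}}" by blast
  next
    fix s assume "s \<in> {s\<in>basis n. T \<subseteq> {j. s j}}"
    then have "merge T (\<lambda>j. j \<in> T) s = s" unfolding merge_def by (intro ext) auto
    then show "X s (merge T (\<lambda>j. j \<in> T) s) = X s s" by simp
  qed
  finally show ?thesis .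
qed

lemma moment:
  fixes X :: qop
  shows "(\<Sum>T\<in>{T. T \<subseteq> {0..<n} \<and> card T = m}. \<Sum>s\<in>{s\<in>basis n. T \<subseteq> {j. s j}}. X s s)
     = (\<Sum>s\<in>basis n. of_nat (wt n s choose m) * X s s)"
proof -
  let ?P = "{T. T \<subseteq> {0..<n} \<and> card T = m}"
  have fP: "finite ?P" by (rule finite_subset[of _ "Pow {0..<n}"]) auto
  have "(\<Sum>T\<in>?P. \<Sum>s\<in>{s\<in>basis n. T \<subseteq> {j. s j}}. X s s)
      = (\<Sum>T\<in>?P. \<Sum>s\<in>basis n. if T \<subseteq> {j. s j} then X s s else 0)"
    by (rule sum.cong[OF refl], rule sum.inter_filter[OF finite_basis])
  also have "\<dots> = (\<Sum>s\<in>basis n. \<Sum>T\<in>?P. if T \<subseteq> {j. s j} then X s s else 0)"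
    by (rule sum.swap)
  also have "\<dots> = (\<Sum>s\<in>basis n. of_nat (wt n s choose m) * X s s)"
  proof (rule sum.cong[OF refl])
    fix s assume s: "s \<in> basis n"
    have U: "{j. s j} = {j. j < n \<and> s j}" using s unfolding asg_def by auto
    have e: "{T \<in> ?P. T \<subseteq> {j. s j}} = {T. T \<subseteq> {j. j < n \<and> s j} \<and> card T = m}"
      unfolding U by auto
    have "(\<Sum>T\<in>?P. if T \<subseteq> {j. s j} then X s s else 0) = (\<Sum>T\<in>{T \<in> ?P. T \<subseteq> {j. s j}}. X s s)"
      by (rule sum.inter_filter[OF fP, symmetric])
    also have "\<dots> = of_nat (card {T \<in> ?P. T \<subseteq> {j. s j}}) * X s s"
      by simp
    also have "\<dots> = of_nat (wt n s choose m) * X s s"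
      unfolding e wt_def using n_subsets[of "{j. j < n \<and> s j}" m] by simp
    finally show "(\<Sum>T\<in>?P. if T \<subseteq> {j. s j} then X s s else 0) = of_nat (wt n s choose m) * X s s" .
  qed
  finally show ?thesis .
qed




definition tr :: "nat \<Rightarrow> nat \<Rightarrow> nat \<Rightarrow> nat" where
  "tr a b j = (if j = a then b else if j = b then a else j)"
definition sw :: "nat \<Rightarrow> nat \<Rightarrow> bits \<Rightarrow> bits" where
  "sw a b t = (\<lambda>j. t (tr a b j))"

lemma tr_tr[simp]: "tr a b (tr a b j) = j" by (simp add: tr_def)
lemma sw_sw[simp]: "sw a b (sw a b t) = t" by (simp add: sw_def)
lemma inj_tr: "inj (tr a b)" by (metis injI tr_tr)
lemma tr_lt: "a < n \<Longrightarrow> b < n \<Longrightarrow> (tr a b j < n) = (j < n)" by (simp add: tr_def)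

lemma basis_iff: "(s \<in> basis n) = (\<forall>j. s j \<longrightarrow> j < n)" unfolding asg_def by simp

lemma sw_basis: assumes "a < n" "b < n" "t \<in> basis n" shows "sw a b t \<in> basis n"
proof -
  have h: "\<And>j. t j \<Longrightarrow> j < n" using assms(3) unfolding basis_iff by blast
  show ?thesis unfolding basis_iff sw_def
  proof (intro allI impI)
    fix j assume "t (tr a b j)"
    then have "tr a b j < n" by (rule h)
    then show "j < n" using tr_lt[OF assms(1,2)] by simp
  qed
qed

lemma sw_wt: assumes "a < n" "b < n" shows "wt n (sw a b t) = wt n t"
proof -
  have "{j. j < n \<and> sw a b t j} = tr a b ` {j. j < n \<and> t j}"
  proof (rule set_eqI, rule iffI)
    fix j assume "j \<in> {j. j < n \<and> sw a b t j}"
    then have "tr a b j \<in> {j. j < n \<and> t j}" "j = tr a b (tr a b j)"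
      using tr_lt[OF assms] by (simp_all add: sw_def)
    then show "j \<in> tr a b ` {j. j < n \<and> t j}" by blast
  next
    fix j assume "j \<in> tr a b ` {j. j < n \<and> t j}"
    then obtain i where "i < n" "t i" "j = tr a b i" by blast
    then show "j \<in> {j. j < n \<and> sw a b t j}" using tr_lt[OF assms] by (simp add: sw_def)
  qed
  then show ?thesis unfolding wt_def
    by (simp add: card_image inj_on_subset[OF inj_tr])
qed

lemma ev_basis: "a \<le> n \<Longrightarrow> ev a \<in> basis n" unfolding basis_iff ev_def by simp
lemma ev_wt: "a \<le> n \<Longrightarrow> wt n (ev a) = a"
proof -
  assume "a \<le> n" then have "{j. j < n \<and> ev a j} = {0..<a}" by (auto simp: ev_def)
  then show ?thesis by (simp add: wt_def)
qed

lemma wt_le: "wt n t \<le> n"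
proof -
  have "card {j. j < n \<and> t j} \<le> card {0..<n}" by (rule card_mono) auto
  then show ?thesis by (simp add: wt_def)
qed

lemma inv_to_ev:
  assumes inv: "\<And>t a b. t \<in> basis n \<Longrightarrow> a < n \<Longrightarrow> b < n \<Longrightarrow> f (sw a b t) = f t"
  shows "t \<in> basis n \<Longrightarrow> f t = f (ev (wt n t))"
proof (induction "card {j. j < n \<and> t j \<noteq> (j < wt n t)}" arbitrary: t rule: less_induct)
  case less
  define w where "w = wt n t"
  define U where "U = {j. j < n \<and> t j}"
  have tB: "\<And>j. t j \<Longrightarrow> j < n" using less.prems unfolding basis_iff by blast
  have cU: "card U = w" by (simp add: U_def w_def wt_def)
  have fU: "finite U" by (simp add: U_def)
  have wn: "w \<le> n" using wt_le w_def by simp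
  show ?case
  proof (cases "\<forall>a<w. t a")
    case True
    have "{0..<w} \<subseteq> U"
    proof
      fix j assume "j \<in> {0..<w}"
      then have "j < w" by simp
      then show "j \<in> U" using True wn unfolding U_def by simp
    qed
    then have eqU: "{0..<w} = U" using cU fU by (simp add: card_subset_eq)
    have "t = ev w"
    proof (rule ext)
      fix j show "t j = ev w j"
      proof (cases "j < n")
        case True
        then have "t j = (j \<in> U)" by (simp add: U_def)
        also have "\<dots> = (j \<in> {0..<w})" using eqU by simp
        finally show ?thesis by (simp add: ev_def)
      next
        case False
        then have "\<not> t j" using tB by blast
        moreover have "\<not> j < w" using False wn by simp
        ultimately show ?thesis by (simp add: ev_def)
      qed
    qed
    then show ?thesis by (simp add: w_def)
  next
    case False
    then obtain a where a: "a < w" "\<not> t a" by blast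
    have "\<not> U \<subseteq> {0..<w}"
    proof
      assume "U \<subseteq> {0..<w}"
      then have "U \<subseteq> {0..<w} - {a}" using a unfolding U_def by blast
      then have "card U \<le> card ({0..<w} - {a})" by (rule card_mono[rotated]) simp
      then show False using a cU by simp
    qed
    then obtain b where "b \<in> U" "b \<notin> {0..<w}" by blast
    then have b: "b < n" "t b" "\<not> b < w" unfolding U_def by simp_all
    have an: "a < n" using a wn by simp
    define t' where "t' = sw a b t"
    have t'B: "t' \<in> basis n" using sw_basis[OF an b(1) less.prems] t'_def by simp
    have wt': "wt n t' = w" using sw_wt[OF an b(1)] t'_def w_def by simp
    have ab: "a \<noteq> b" using a b by simp
    define D where "D = {j. j < n \<and> t j \<noteq> (j < w)}"
    have D: "{j. j < n \<and> t' j \<noteq> (j < wt n t')} = D - {a, b}"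
    proof (rule set_eqI)
      fix j
      show "(j \<in> {j. j < n \<and> t' j \<noteq> (j < wt n t')}) = (j \<in> D - {a, b})"
      proof (cases "j = a")
        case True then show ?thesis using a b ab unfolding wt' by (simp add: D_def t'_def sw_def tr_def)
      next
        case F1: False
        show ?thesis
        proof (cases "j = b")
          case True then show ?thesis using a b ab unfolding wt' by (simp add: D_def t'_def sw_def tr_def)
        next
          case False then show ?thesis using F1 unfolding wt' by (simp add: D_def t'_def sw_def tr_def)
        qed
      qed
    qed
    have aD: "a \<in> D" using a an by (simp add: D_def)
    have "card (D - {a, b}) < card D"
      by (rule psubset_card_mono) (use aD in \<open>simp_all add: D_def, blast\<close>)
    then have "f t' = f (ev (wt n t'))" using less.hyps[OF _ t'B] D by (simp add: D_def w_def)
    moreover have "f t' = f t" using inv[OF less.prems an b(1)] t'_def by simp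
    ultimately show ?thesis using wt' w_def by simp
  qed
qed




lemma dicke_eq: "dicke n i s = (if s \<in> basis n \<and> wt n s = i then complex_of_real (1 / sqrt (real (n choose i))) else 0)"
  by (simp add: dicke_def wt_def)

lemma rho_eq:
  "dicke_mix n k lam s t = (if s \<in> basis n \<and> t \<in> basis n \<and> wt n s = wt n t \<and> wt n s \<le> k
      then complex_of_real (lam (wt n s) / real (n choose wt n s)) else 0)"
proof -
  have e: "\<And>i. complex_of_real (lam i) * dicke n i s * cnj (dicke n i t) =
     (if i = wt n s then (if s \<in> basis n \<and> t \<in> basis n \<and> wt n s = wt n t
      then complex_of_real (lam (wt n s) / real (n choose wt n s)) else 0) else 0)"
  proof -
    fix i
    have r: "lam i * (1 / sqrt (real (n choose i))) * (1 / sqrt (real (n choose i))) = lam i / real (n choose i)"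
    proof -
      have "sqrt (real (n choose i)) * sqrt (real (n choose i)) = real (n choose i)" by simp
      then show ?thesis by (metis divide_divide_eq_left' mult.commute times_divide_eq_right mult_1_right)
    qed
    show "complex_of_real (lam i) * dicke n i s * cnj (dicke n i t) =
     (if i = wt n s then (if s \<in> basis n \<and> t \<in> basis n \<and> wt n s = wt n t
      then complex_of_real (lam (wt n s) / real (n choose wt n s)) else 0) else 0)"
    proof (cases "s \<in> basis n \<and> wt n s = i \<and> t \<in> basis n \<and> wt n t = i")
      case True
      have "complex_of_real (lam i) * dicke n i s * cnj (dicke n i t) =
         complex_of_real (lam i * (1 / sqrt (real (n choose i))) * (1 / sqrt (real (n choose i))))"
        using True unfolding dicke_eq by (simp only: simp_thms if_True of_real_mult complex_cnj_complex_of_real)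
      then show ?thesis using True r by simp
    next
      case False then show ?thesis unfolding dicke_eq by auto
    qed
  qed
  show ?thesis unfolding dicke_mix_def e by simp
qed

lemma card_weight: "i \<le> n \<Longrightarrow> card {s \<in> basis n. wt n s = i} = n choose i"
proof -
  assume "i \<le> n"
  have eq: "{s \<in> basis n. wt n s = i} = (\<lambda>T j. j \<in> T) ` {T. T \<subseteq> {0..<n} \<and> card T = i}"
  proof (rule set_eqI, rule iffI)
    fix s assume s: "s \<in> {s \<in> basis n. wt n s = i}"
    then have 1: "{j. s j} \<subseteq> {0..<n}" and 2: "{j. s j} = {j. j < n \<and> s j}"
      by (auto simp: asg_def)
    have "card {j. s j} = i" using s 2 unfolding wt_def by simp
    then have "{j. s j} \<in> {T. T \<subseteq> {0..<n} \<and> card T = i}" using 1 by simp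
    moreover have "s = (\<lambda>j. j \<in> {j. s j})" by simp
    ultimately show "s \<in> (\<lambda>T j. j \<in> T) ` {T. T \<subseteq> {0..<n} \<and> card T = i}"
      by (rule rev_image_eqI)
  next
    fix s assume "s \<in> (\<lambda>T j. j \<in> T) ` {T. T \<subseteq> {0..<n} \<and> card T = i}"
    then obtain T where T: "T \<subseteq> {0..<n}" "card T = i" "s = (\<lambda>j. j \<in> T)" by auto
    have "{j. j < n \<and> s j} = T" using T(1) unfolding T(3) by auto
    moreover have "s \<in> basis n" using T(1) unfolding T(3) asg_def by auto
    ultimately show "s \<in> {s \<in> basis n. wt n s = i}" using T(2) by (simp add: wt_def)
  qed
  have "inj_on (\<lambda>T j. j \<in> T) {T. T \<subseteq> {0..<n} \<and> card T = i}"
  proof (rule inj_onI)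
    fix A B :: "nat set" assume h: "(\<lambda>j. j \<in> A) = (\<lambda>j. j \<in> B)"
    then have "\<forall>j. (j \<in> A) = (j \<in> B)" by (simp add: fun_eq_iff)
    then show "A = B" by blast
  qed
  then have "card ((\<lambda>T j. j \<in> T) ` {T. T \<subseteq> {0..<n} \<and> card T = i}) = card {T. T \<subseteq> {0..<n} \<and> card T = i}"
    by (rule card_image)
  also have "\<dots> = n choose i" using n_subsets[of "{0..<n}" i] by simp
  finally show ?thesis using eq by simp
qed




lemma prod_sums: "(c::complex) * sum f A * sum g B = (\<Sum>s\<in>A. \<Sum>t\<in>B. c * f s * g t)"
proof -
  have "c * sum f A = sum (\<lambda>s. c * f s) A" by (rule sum_distrib_left)
  then show ?thesis by (simp only: sum_product)
qed

lemma rho_density: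
  assumes kn: "k \<le> n" and lam0: "\<forall>i\<in>{0..k}. lam i \<ge> 0" and lam1: "(\<Sum>i\<in>{0..k}. lam i) = 1"
  shows "density n (dicke_mix n k lam)"
proof -
  let ?r = "dicke_mix n k lam"
  have z: "\<forall>s t. (s \<notin> basis n \<or> t \<notin> basis n) \<longrightarrow> ?r s t = 0" by (simp add: rho_eq)
  have psd: "Im (qf n ?r v) = 0 \<and> Re (qf n ?r v) \<ge> 0" for v
  proof -
    define z where "z i = (\<Sum>t\<in>basis n. cnj (dicke n i t) * v t)" for i
    have cz: "(\<Sum>s\<in>basis n. cnj (v s) * dicke n i s) = cnj (z i)" for i
    proof -
      have "cnj (z i) = (\<Sum>s\<in>basis n. dicke n i s * cnj (v s))" unfolding z_def cnj_sum by simp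
      then show ?thesis by (simp add: mult.commute)
    qed
    have "qf n ?r v = (\<Sum>s\<in>basis n. \<Sum>t\<in>basis n. \<Sum>i\<in>{0..k}.
            complex_of_real (lam i) * (cnj (v s) * dicke n i s) * (cnj (dicke n i t) * v t))"
      unfolding qf_def bil_def dicke_mix_def
    proof (rule sum.cong[OF refl], rule sum.cong[OF refl])
      fix s t
      have "cnj (v s) * (\<Sum>i = 0..k. complex_of_real (lam i) * dicke n i s * cnj (dicke n i t)) * v t
          = (\<Sum>i = 0..k. cnj (v s) * (complex_of_real (lam i) * dicke n i s * cnj (dicke n i t)) * v t)"
        by (simp add: sum_distrib_left sum_distrib_right)
      also have "\<dots> = (\<Sum>i\<in>{0..k}. complex_of_real (lam i) * (cnj (v s) * dicke n i s) * (cnj (dicke n i t) * v t))"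
        by (rule sum.cong[OF refl]) (simp only: ac_simps)
      finally show "cnj (v s) * (\<Sum>i = 0..k. complex_of_real (lam i) * dicke n i s * cnj (dicke n i t)) * v t
          = (\<Sum>i\<in>{0..k}. complex_of_real (lam i) * (cnj (v s) * dicke n i s) * (cnj (dicke n i t) * v t))" .
    qed
    also have "\<dots> = (\<Sum>s\<in>basis n. \<Sum>i\<in>{0..k}. \<Sum>t\<in>basis n.
            complex_of_real (lam i) * (cnj (v s) * dicke n i s) * (cnj (dicke n i t) * v t))"
      by (rule sum.cong[OF refl], rule sum.swap)
    also have "\<dots> = (\<Sum>i\<in>{0..k}. \<Sum>s\<in>basis n. \<Sum>t\<in>basis n.
            complex_of_real (lam i) * (cnj (v s) * dicke n i s) * (cnj (dicke n i t) * v t))"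
      by (rule sum.swap)
    also have "\<dots> = (\<Sum>i\<in>{0..k}. complex_of_real (lam i) * (\<Sum>s\<in>basis n. cnj (v s) * dicke n i s) * z i)"
      unfolding z_def by (rule sum.cong[OF refl]) (rule prod_sums[symmetric])
    also have "\<dots> = (\<Sum>i\<in>{0..k}. complex_of_real (lam i * (cmod (z i))\<^sup>2))"
      unfolding cz
    proof (rule sum.cong[OF refl])
      fix i
      have "cnj (z i) * z i = complex_of_real ((cmod (z i))\<^sup>2)"
        using complex_norm_square[of "z i"] by (simp only: mult.commute)
      then show "complex_of_real (lam i) * cnj (z i) * z i = complex_of_real (lam i * (cmod (z i))\<^sup>2)"
        by (simp only: mult.assoc of_real_mult)
    qed
    also have "\<dots> = complex_of_real (\<Sum>i\<in>{0..k}. lam i * (cmod (z i))\<^sup>2)" by (simp only: of_real_sum)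
    finally have qe: "qf n ?r v = complex_of_real (\<Sum>i\<in>{0..k}. lam i * (cmod (z i))\<^sup>2)" .
    have "0 \<le> (\<Sum>i\<in>{0..k}. lam i * (cmod (z i))\<^sup>2)"
      using lam0 by (intro sum_nonneg) simp
    then show ?thesis unfolding qe by simp
  qed
  have tr: "(\<Sum>s\<in>basis n. ?r s s) = 1"
  proof -
    have "(\<Sum>s\<in>basis n. ?r s s) = (\<Sum>s\<in>basis n. \<Sum>i\<in>{0..k}.
            if wt n s = i then complex_of_real (lam i / real (n choose i)) else 0)"
      by (rule sum.cong[OF refl]) (simp add: rho_eq)
    also have "\<dots> = (\<Sum>i\<in>{0..k}. \<Sum>s\<in>basis n.
            if wt n s = i then complex_of_real (lam i / real (n choose i)) else 0)"
      by (rule sum.swap)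
    also have "\<dots> = (\<Sum>i\<in>{0..k}. of_nat (card {s \<in> basis n. wt n s = i}) * complex_of_real (lam i / real (n choose i)))"
      by (rule sum.cong[OF refl]) (simp add: sum.If_cases finite_basis Int_def)
    also have "\<dots> = (\<Sum>i\<in>{0..k}. complex_of_real (lam i))"
    proof (rule sum.cong[OF refl])
      fix i assume "i \<in> {0..k}"
      then have i: "i \<le> n" using kn by simp
      then have nz: "real (n choose i) \<noteq> 0" by simp
      have "of_nat (card {s \<in> basis n. wt n s = i}) * complex_of_real (lam i / real (n choose i))
          = complex_of_real (real (n choose i) * (lam i / real (n choose i)))"
        using card_weight[OF i] by simp
      also have "\<dots> = complex_of_real (lam i)" using nz by simp
      finally show "of_nat (card {s \<in> basis n. wt n s = i}) * complex_of_real (lam i / real (n choose i)) = complex_of_real (lam i)" .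
    qed
    also have "\<dots> = 1" using lam1 by (simp flip: of_real_sum)
    finally show ?thesis .
  qed
  show ?thesis unfolding density_def Let_def using z psd tr unfolding qf_def bil_def by blast
qed




definition altS :: "nat \<Rightarrow> nat \<Rightarrow> int" where
  "altS N d = (\<Sum>j\<in>{0..d}. (-1)^j * int (N choose j))"

lemma altS_Suc: "altS (Suc M) d = (-1)^d * int (M choose d)"
proof (induction d)
  case 0 then show ?case by (simp add: altS_def)
next
  case (Suc d)
  have "altS (Suc M) (Suc d) = altS (Suc M) d + (-1)^(Suc d) * int (Suc M choose Suc d)"
    by (simp add: altS_def)
  also have "\<dots> = (-1)^d * int (M choose d) + (-1)^(Suc d) * (int (M choose d) + int (M choose Suc d))"
    using Suc by simp
  also have "\<dots> = (-1)^(Suc d) * int (M choose Suc d)" by (simp add: algebra_simps)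
  finally show ?case .
qed

lemma altS_0: "altS 0 d = 1"
  by (induction d) (simp_all add: altS_def)

definition coef :: "nat \<Rightarrow> nat \<Rightarrow> int" where
  "coef r m = (if r \<le> m then (-1)^(m - r) * int (m choose r) else 0)"

definition hv :: "nat \<Rightarrow> nat \<Rightarrow> nat \<Rightarrow> int" where
  "hv r k w = (\<Sum>m\<in>{0..k}. coef r m * int (w choose m))"

lemma term_eq: "int ((j + r) choose r) * int (w choose (j + r)) = int (w choose r) * int ((w - r) choose j)"
proof (cases "j + r \<le> w")
  case True
  have "(w choose (j + r)) * ((j + r) choose r) = (w choose r) * ((w - r) choose (j + r - r))"
    by (rule choose_mult) (use True in simp_all)
  then show ?thesis by (simp add: mult.commute flip: of_nat_mult)
next
  case False
  then have "w choose (j + r) = 0" by simp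
  moreover have "int (w choose r) * int ((w - r) choose j) = 0"
  proof (cases "r \<le> w")
    case True then have "(w - r) choose j = 0" using False by simp
    then show ?thesis by simp
  next
    case False then show ?thesis by simp
  qed
  ultimately show ?thesis by (metis mult_zero_right of_nat_0)
qed

lemma hv_eq: assumes "r \<le> k" shows "hv r k w = int (w choose r) * altS (w - r) (k - r)"
proof -
  have "hv r k w = (\<Sum>m\<in>{r..k}. coef r m * int (w choose m))"
    unfolding hv_def
    by (rule sum.mono_neutral_right) (auto simp: coef_def)
  also have "\<dots> = (\<Sum>m\<in>{0 + r..(k - r) + r}. coef r m * int (w choose m))"
    using assms by simp
  also have "\<dots> = (\<Sum>j\<in>{0..k - r}. coef r (j + r) * int (w choose (j + r)))"
    by (rule sum.shift_bounds_cl_nat_ivl)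
  also have "\<dots> = (\<Sum>j\<in>{0..k - r}. int (w choose r) * ((-1)^j * int ((w - r) choose j)))"
  proof (rule sum.cong[OF refl])
    fix j
    have "coef r (j + r) * int (w choose (j + r)) = (-1)^j * (int ((j + r) choose r) * int (w choose (j + r)))"
      by (simp add: coef_def)
    also have "\<dots> = int (w choose r) * ((-1)^j * int ((w - r) choose j))"
      by (subst term_eq) (simp only: mult_ac)
    finally show "coef r (j + r) * int (w choose (j + r)) = int (w choose r) * ((-1)^j * int ((w - r) choose j))" .
  qed
  also have "\<dots> = int (w choose r) * altS (w - r) (k - r)"
    by (simp add: altS_def sum_distrib_left)
  finally show ?thesis .
qed

lemma hv_zero: assumes "r \<le> k" "w \<le> k" "w \<noteq> r" shows "hv r k w = 0"
proof (cases "w < r")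
  case True then show ?thesis using assms by (simp add: hv_eq)
next
  case False
  then obtain M where M: "w - r = Suc M" using assms by (metis Suc_diff_Suc le_neq_implies_less not_less)
  have "M < k - r" using M assms by simp
  then show ?thesis using assms by (simp add: hv_eq M altS_Suc)
qed

lemma hv_r: assumes "r \<le> k" shows "hv r k r = 1"
  using assms by (simp add: hv_eq altS_0)

lemma hv_pos: assumes "r \<le> k" "even (k - r)" "k < w" shows "hv r k w > 0"
proof -
  obtain M where M: "w - r = Suc M" using assms by (metis Suc_diff_Suc le_less_trans)
  have "k - r \<le> M" using M assms by simp
  then have "M choose (k - r) > 0" by simp
  moreover have "w choose r > 0" using assms by simp
  ultimately show ?thesis using assms by (simp add: hv_eq M altS_Suc)
qed

lemma hv_nonneg: assumes "r \<le> k" "even (k - r)" shows "hv r k w \<ge> 0"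
proof (cases "k < w")
  case True then show ?thesis using hv_pos[OF assms True] by simp
next
  case False then show ?thesis using assms hv_zero[of r k w] hv_r[of r k] by (cases "w = r") simp_all
qed




lemma hsum_expand:
  "(\<Sum>s\<in>basis n. of_int (hv r k (wt n s)) * X s s) =
   (\<Sum>m\<in>{0..k}. of_int (coef r m) * (\<Sum>T\<in>{T. T \<subseteq> {0..<n} \<and> card T = m}. ptrace n T X (\<lambda>j. j \<in> T) (\<lambda>j. j \<in> T)))"
proof -
  have "(\<Sum>s\<in>basis n. of_int (hv r k (wt n s)) * X s s) =
        (\<Sum>s\<in>basis n. \<Sum>m\<in>{0..k}. of_int (coef r m) * (of_nat (wt n s choose m) * X s s))"
    by (rule sum.cong[OF refl]) (simp add: hv_def sum_distrib_right mult.assoc)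
  also have "\<dots> = (\<Sum>m\<in>{0..k}. \<Sum>s\<in>basis n. of_int (coef r m) * (of_nat (wt n s choose m) * X s s))"
    by (rule sum.swap)
  also have "\<dots> = (\<Sum>m\<in>{0..k}. of_int (coef r m) * (\<Sum>s\<in>basis n. of_nat (wt n s choose m) * X s s))"
    by (simp only: sum_distrib_left)
  also have "\<dots> = (\<Sum>m\<in>{0..k}. of_int (coef r m) * (\<Sum>T\<in>{T. T \<subseteq> {0..<n} \<and> card T = m}. ptrace n T X (\<lambda>j. j \<in> T) (\<lambda>j. j \<in> T)))"
  proof (rule sum.cong[OF refl])
    fix m
    have "(\<Sum>T\<in>{T. T \<subseteq> {0..<n} \<and> card T = m}. ptrace n T X (\<lambda>j. j \<in> T) (\<lambda>j. j \<in> T))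
        = (\<Sum>T\<in>{T. T \<subseteq> {0..<n} \<and> card T = m}. \<Sum>s\<in>{s\<in>basis n. T \<subseteq> {j. s j}}. X s s)"
      by (rule sum.cong[OF refl]) (simp add: ptrace_diag)
    also have "\<dots> = (\<Sum>s\<in>basis n. of_nat (wt n s choose m) * X s s)" by (rule moment)
    finally show "of_int (coef r m) * (\<Sum>s\<in>basis n. of_nat (wt n s choose m) * X s s) =
       of_int (coef r m) * (\<Sum>T\<in>{T. T \<subseteq> {0..<n} \<and> card T = m}. ptrace n T X (\<lambda>j. j \<in> T) (\<lambda>j. j \<in> T))"
      by simp
  qed
  finally show ?thesis .
qed

lemma hsum_eq:
  assumes marg: "\<And>T. T \<subseteq> {0..<n} \<Longrightarrow> card T \<le> k \<Longrightarrow> same_marginal n T X Y"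
  shows "(\<Sum>s\<in>basis n. of_int (hv r k (wt n s)) * X s s) = (\<Sum>s\<in>basis n. of_int (hv r k (wt n s)) * Y s s)"
  unfolding hsum_expand
proof (rule sum.cong[OF refl])
  fix m assume m: "m \<in> {0..k}"
  have "(\<Sum>T\<in>{T. T \<subseteq> {0..<n} \<and> card T = m}. ptrace n T X (\<lambda>j. j \<in> T) (\<lambda>j. j \<in> T))
      = (\<Sum>T\<in>{T. T \<subseteq> {0..<n} \<and> card T = m}. ptrace n T Y (\<lambda>j. j \<in> T) (\<lambda>j. j \<in> T))"
  proof (rule sum.cong[OF refl])
    fix T assume T: "T \<in> {T. T \<subseteq> {0..<n} \<and> card T = m}"
    then have "same_marginal n T X Y" using m by (intro marg) auto
    moreover have "(\<lambda>j. j \<in> T) \<in> asg T" by (simp add: asg_def)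
    ultimately show "ptrace n T X (\<lambda>j. j \<in> T) (\<lambda>j. j \<in> T) = ptrace n T Y (\<lambda>j. j \<in> T) (\<lambda>j. j \<in> T)"
      unfolding same_marginal_def by blast
  qed
  then show "of_int (coef r m) * (\<Sum>T\<in>{T. T \<subseteq> {0..<n} \<and> card T = m}. ptrace n T X (\<lambda>j. j \<in> T) (\<lambda>j. j \<in> T)) =
         of_int (coef r m) * (\<Sum>T\<in>{T. T \<subseteq> {0..<n} \<and> card T = m}. ptrace n T Y (\<lambda>j. j \<in> T) (\<lambda>j. j \<in> T))"
    by simp
qed

lemma diag_real: assumes d: "density n X" and s: "s \<in> basis n"
  shows "Im (X s s) = 0" "Re (X s s) \<ge> 0"
  using density_qf[OF d, of "dl s"] qf_delta[OF s] by simp_all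

lemma support_diag:
  assumes r: "r \<le> k" "even (k - r)" "lam r = 0" and kn: "k \<le> n"
    and d: "density n X"
    and marg: "\<And>T. T \<subseteq> {0..<n} \<Longrightarrow> card T \<le> k \<Longrightarrow> same_marginal n T X (dicke_mix n k lam)"
    and s: "s \<in> basis n" and sk: "k < wt n s \<or> wt n s = r"
  shows "X s s = 0"
proof -
  let ?t = "\<lambda>s. of_int (hv r k (wt n s)) * X s s"
  have "(\<Sum>s\<in>basis n. of_int (hv r k (wt n s)) * dicke_mix n k lam s s) = 0"
  proof (rule sum.neutral, rule ballI)
    fix s assume sB: "s \<in> basis n"
    show "of_int (hv r k (wt n s)) * dicke_mix n k lam s s = 0"
    proof (cases "wt n s \<le> k")
      case True
      show ?thesis
      proof (cases "wt n s = r")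
        case True then show ?thesis using r by (simp add: rho_eq)
      next
        case False then show ?thesis using hv_zero[OF r(1) \<open>wt n s \<le> k\<close> False] by simp
      qed
    qed (simp add: rho_eq)
  qed
  then have sum0: "(\<Sum>s\<in>basis n. ?t s) = 0" using hsum_eq[OF marg] by simp
  have re: "Re (?t s) = real_of_int (hv r k (wt n s)) * Re (X s s)" for s by simp
  have "(\<Sum>s\<in>basis n. Re (?t s)) = 0" using arg_cong[OF sum0, of Re] by (simp only: Re_sum) simp
  moreover have "\<forall>s\<in>basis n. Re (?t s) \<ge> 0"
    using hv_nonneg[OF r(1,2)] diag_real(2)[OF d] by (simp only: re) (simp add: mult_nonneg_nonneg)
  ultimately have "\<forall>s\<in>basis n. Re (?t s) = 0"
    using sum_nonneg_eq_0_iff[OF finite_basis[of n], where f="\<lambda>s. Re (?t s)"] by blast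
  then have "real_of_int (hv r k (wt n s)) * Re (X s s) = 0" using s re by simp
  moreover have "hv r k (wt n s) > 0" using hv_pos[OF r(1,2)] hv_r[OF r(1)] sk by auto
  ultimately have "Re (X s s) = 0" by simp
  then show ?thesis using diag_real(1)[OF d s] by (simp add: complex_eq_iff)
qed

lemma support:
  assumes r: "r \<le> k" "even (k - r)" "lam r = 0" and kn: "k \<le> n"
    and d: "density n X"
    and marg: "\<And>T. T \<subseteq> {0..<n} \<Longrightarrow> card T \<le> k \<Longrightarrow> same_marginal n T X (dicke_mix n k lam)"
    and s: "s \<in> basis n" and t: "t \<in> basis n"
    and sk: "(k < wt n s \<or> wt n s = r) \<or> (k < wt n t \<or> wt n t = r)"
  shows "X s t = 0"
proof -
  have col: "X u v = 0" if u: "u \<in> basis n" and v: "v \<in> basis n" and vk: "k < wt n v \<or> wt n v = r" for u v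
  proof -
    have "qf n X (dl v) = 0" using qf_delta[OF v] support_diag[OF r kn d marg v vk] by simp
    from kernel[OF d this u] show ?thesis using v by (simp add: sum_dl_right finite_basis)
  qed
  show ?thesis
  proof (cases "k < wt n t \<or> wt n t = r")
    case True then show ?thesis using col[OF s t] by simp
  next
    case False then have "k < wt n s \<or> wt n s = r" using sk by simp
    then have "X t s = 0" using col[OF t s] by simp
    then show ?thesis using herm[OF d, of s t] by simp
  qed
qed




lemma merge_self: "(\<forall>j\<in>S. s j = x j) \<Longrightarrow> merge S x s = s"
  unfolding merge_def by (intro ext) auto

lemma merge_swap:
  assumes "a \<noteq> b" "y a = s b" "y b = s a"
  shows "merge {a, b} y s = sw a b s"
proof (rule ext)
  fix j show "merge {a, b} y s j = sw a b s j"
    using assms unfolding merge_def sw_def tr_def by auto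
qed

lemma rho_sw: assumes "a < n" "b < n" "t \<in> basis n" "s \<in> basis n"
  shows "dicke_mix n k lam s (sw a b t) = dicke_mix n k lam s t"
    "dicke_mix n k lam (sw a b s) t = dicke_mix n k lam s t"
  using assms sw_basis[OF assms(1,2)] sw_wt[OF assms(1,2)] by (simp_all add: rho_eq)

lemma swap_inv:
  assumes d: "density n X" and marg: "same_marginal n {a, b} X (dicke_mix n k lam)"
    and an: "a < n" and bn: "b < n" and ab: "a \<noteq> b"
    and s: "s \<in> basis n" and t: "t \<in> basis n"
  shows "X s (sw a b t) = X s t"
proof -
  let ?S = "{a, b}"
  let ?r = "dicke_mix n k lam"
  define x1 where "x1 = (\<lambda>j::nat. j = a)"
  define x2 where "x2 = (\<lambda>j::nat. j = b)"
  define A1 where "A1 = {s\<in>basis n. \<forall>j\<in>?S. s j = x1 j}"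
  define A2 where "A2 = {s\<in>basis n. \<forall>j\<in>?S. s j = x2 j}"
  have S: "?S \<subseteq> {0..<n}" using an bn by simp
  have x1S: "x1 \<in> asg ?S" and x2S: "x2 \<in> asg ?S" unfolding asg_def x1_def x2_def by auto
  have A1iff: "u \<in> A1 \<longleftrightarrow> u \<in> basis n \<and> u a \<and> \<not> u b" for u
    using ab unfolding A1_def x1_def by auto
  have A2iff: "u \<in> A2 \<longleftrightarrow> u \<in> basis n \<and> \<not> u a \<and> u b" for u
    using ab unfolding A2_def x2_def by auto
  have swa: "sw a b u a = u b" "sw a b u b = u a" for u by (simp_all add: sw_def tr_def)
  have reidx: "(\<Sum>u\<in>A2. g u) = (\<Sum>u\<in>A1. g (sw a b u))" for g :: "bits \<Rightarrow> complex"
  proof (rule sum.reindex_bij_witness[where i="sw a b" and j="sw a b"])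
    fix u assume "u \<in> A2"
    then show "sw a b (sw a b u) = u" "sw a b u \<in> A1"
      using sw_basis[OF an bn] swa unfolding A1iff A2iff by auto
  next
    fix u assume "u \<in> A1"
    then show "sw a b (sw a b u) = u" "sw a b u \<in> A2"
      using sw_basis[OF an bn] swa unfolding A1iff A2iff by auto
  qed simp
  have p11: "ptrace n ?S Z x1 x1 = (\<Sum>u\<in>A1. Z u u)" for Z
    unfolding ptrace_alt[OF S x1S] A1_def[symmetric]
    by (rule sum.cong[OF refl]) (simp add: merge_self A1_def)
  have p22: "ptrace n ?S Z x2 x2 = (\<Sum>u\<in>A1. Z (sw a b u) (sw a b u))" for Z
  proof -
    have "ptrace n ?S Z x2 x2 = (\<Sum>u\<in>A2. Z u u)"
      unfolding ptrace_alt[OF S x2S] A2_def[symmetric]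
      by (rule sum.cong[OF refl]) (simp add: merge_self A2_def)
    then show ?thesis using reidx by simp
  qed
  have p12: "ptrace n ?S Z x1 x2 = (\<Sum>u\<in>A1. Z u (sw a b u))" for Z
    unfolding ptrace_alt[OF S x1S] A1_def[symmetric]
  proof (rule sum.cong[OF refl])
    fix u assume "u \<in> A1"
    then have "merge ?S x2 u = sw a b u" using ab by (intro merge_swap) (auto simp: A1iff x2_def)
    then show "Z u (merge ?S x2 u) = Z u (sw a b u)" by simp
  qed
  have p21: "ptrace n ?S Z x2 x1 = (\<Sum>u\<in>A1. Z (sw a b u) u)" for Z
  proof -
    have "ptrace n ?S Z x2 x1 = (\<Sum>u\<in>A2. Z u (sw a b u))"
      unfolding ptrace_alt[OF S x2S] A2_def[symmetric]
    proof (rule sum.cong[OF refl])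
      fix u assume "u \<in> A2"
      then have "merge ?S x1 u = sw a b u" using ab by (intro merge_swap) (auto simp: A2iff x1_def)
      then show "Z u (merge ?S x1 u) = Z u (sw a b u)" by simp
    qed
    then show ?thesis using reidx[of "\<lambda>u. Z u (sw a b u)"] by simp
  qed
  define Q where "Q Z = ptrace n ?S Z x1 x1 + ptrace n ?S Z x2 x2 - ptrace n ?S Z x1 x2 - ptrace n ?S Z x2 x1" for Z
  have Qs: "Q Z = (\<Sum>u\<in>A1. Z u u + Z (sw a b u) (sw a b u) - Z u (sw a b u) - Z (sw a b u) u)" for Z
    unfolding Q_def p11 p22 p12 p21 by (simp add: sum.distrib sum_subtractf)
  have "Q X = Q ?r"
    using marg x1S x2S unfolding Q_def same_marginal_def by simp
  also have "Q ?r = 0"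
    unfolding Qs
  proof (rule sum.neutral, rule ballI)
    fix u assume "u \<in> A1"
    then have uB: "u \<in> basis n" by (simp add: A1iff)
    have swB: "sw a b u \<in> basis n" using sw_basis[OF an bn uB] .
    show "?r u u + ?r (sw a b u) (sw a b u) - ?r u (sw a b u) - ?r (sw a b u) u = 0"
      using rho_sw[OF an bn uB uB] rho_sw[OF an bn uB swB] by simp
  qed
  finally have "(\<Sum>u\<in>A1. qf n X (\<lambda>x. dl u x - dl (sw a b u) x)) = 0"
    unfolding Qs
    by (subst sum.cong[OF refl, where h="\<lambda>u. X u u + X (sw a b u) (sw a b u) - X u (sw a b u) - X (sw a b u) u"])
       (auto simp: A1iff qf_delta2 sw_basis[OF an bn])
  then have "Re (\<Sum>u\<in>A1. qf n X (\<lambda>x. dl u x - dl (sw a b u) x)) = 0" by simp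
  then have sumRe: "(\<Sum>u\<in>A1. Re (qf n X (\<lambda>x. dl u x - dl (sw a b u) x))) = 0"
    by (simp only: Re_sum)
  have fA1: "finite A1" unfolding A1_def using finite_basis[of n] by simp
  have "\<forall>u\<in>A1. Re (qf n X (\<lambda>x. dl u x - dl (sw a b u) x)) = 0"
    using sum_nonneg_eq_0_iff[OF fA1, where f="\<lambda>u. Re (qf n X (\<lambda>x. dl u x - dl (sw a b u) x))"]
      sumRe density_qf[OF d] by blast
  then have q0: "qf n X (\<lambda>x. dl u x - dl (sw a b u) x) = 0" if "u \<in> A1" for u
    using that density_qf[OF d, of "\<lambda>x. dl u x - dl (sw a b u) x"] by (simp add: complex_eq_iff)
  have main: "X s u = X s (sw a b u)" if u: "u \<in> A1" for u
  proof -
    have uB: "u \<in> basis n" using u by (simp add: A1iff)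
    have "(\<Sum>t'\<in>basis n. X s t' * (dl u t' - dl (sw a b u) t')) = 0"
      by (rule kernel[OF d q0[OF u] s])
    then show ?thesis using mul_delta2[OF uB sw_basis[OF an bn uB], of X s] by simp
  qed
  show ?thesis
  proof (cases "t \<in> A1")
    case True then show ?thesis using main by simp
  next
    case F: False
    show ?thesis
    proof (cases "t \<in> A2")
      case True
      then have "sw a b t \<in> A1" using sw_basis[OF an bn] swa unfolding A1iff A2iff by auto
      then show ?thesis using main[of "sw a b t"] by simp
    next
      case False
      then have "t a = t b" using F t unfolding A1iff A2iff by auto
      then have "sw a b t = t" by (intro ext) (simp add: sw_def tr_def)
      then show ?thesis by simp
    qed
  qed
qed




lemma sw_same: "sw a a t = t" unfolding sw_def tr_def by (rule ext) auto

lemma rep_X: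
  assumes d: "density n X" and k2: "2 \<le> k"
    and marg: "\<And>T. T \<subseteq> {0..<n} \<Longrightarrow> card T \<le> k \<Longrightarrow> same_marginal n T X (dicke_mix n k lam)"
    and s: "s \<in> basis n" and t: "t \<in> basis n"
  shows "X s t = X (ev (wt n s)) (ev (wt n t))"
proof -
  have right: "X u (sw a b v) = X u v" if u: "u \<in> basis n" and v: "v \<in> basis n" and a: "a < n" and b: "b < n" for u v a b
  proof (cases "a = b")
    case True then show ?thesis by (simp add: sw_same)
  next
    case False
    have "same_marginal n {a, b} X (dicke_mix n k lam)"
      by (rule marg) (use a b False k2 in auto)
    then show ?thesis using swap_inv[OF d _ a b False u v] by simp
  qed
  have evB: "ev (wt n t) \<in> basis n" using ev_basis wt_le by blast
  have "X s t = X s (ev (wt n t))"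
    by (rule inv_to_ev[where f="X s", OF _ t]) (use right[OF s] in simp)
  also have "\<dots> = X (ev (wt n s)) (ev (wt n t))"
  proof (rule inv_to_ev[where f="\<lambda>u. X u (ev (wt n t))", OF _ s])
    fix u a b assume u: "u \<in> basis n" and a: "a < n" and b: "b < n"
    have "X (sw a b u) (ev (wt n t)) = cnj (X (ev (wt n t)) (sw a b u))" by (rule herm[OF d])
    also have "\<dots> = cnj (X (ev (wt n t)) u)" using right[OF evB u a b] by simp
    also have "\<dots> = X u (ev (wt n t))" using herm[OF d, of u "ev (wt n t)"] by simp
    finally show "X (sw a b u) (ev (wt n t)) = X u (ev (wt n t))" .
  qed
  finally show ?thesis .
qed

lemma wt0: assumes "s \<in> basis n" "wt n s = 0" shows "s = ev 0"
proof (rule ext)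
  fix j
  have "{j. j < n \<and> s j} = {}" using assms(2) by (simp add: wt_def)
  moreover have "s j \<Longrightarrow> j < n" using assms(1) unfolding basis_iff by blast
  ultimately show "s j = ev 0 j" by (auto simp: ev_def)
qed

lemma rep_rho:
  assumes s: "s \<in> basis n" and t: "t \<in> basis n"
  shows "dicke_mix n k lam s t = dicke_mix n k lam (ev (wt n s)) (ev (wt n t))"
  using s t ev_basis[OF wt_le] ev_wt[OF wt_le] by (simp add: rho_eq)

lemma wt_merge:
  assumes kn: "k \<le> n" and a: "a \<le> k" and c: "c \<in> asg ({0..<n} - {0..<k})"
  shows "wt n (merge {0..<k} (ev a) c) \<ge> a"
    "c \<noteq> (\<lambda>_. False) \<Longrightarrow> wt n (merge {0..<k} (ev a) c) > a"
proof -
  have fin: "finite {j. j < n \<and> merge {0..<k} (ev a) c j}" by simp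
  have sub: "{0..<a} \<subseteq> {j. j < n \<and> merge {0..<k} (ev a) c j}"
    using a kn by (auto simp: merge_def ev_def)
  show "wt n (merge {0..<k} (ev a) c) \<ge> a"
    unfolding wt_def using card_mono[OF fin sub] by simp
  assume "c \<noteq> (\<lambda>_. False)"
  then obtain j0 where j0: "c j0" by auto
  then have j0': "j0 < n" "k \<le> j0" using c unfolding asg_def by auto
  have sub2: "insert j0 {0..<a} \<subseteq> {j. j < n \<and> merge {0..<k} (ev a) c j}"
    using sub j0 j0' by (auto simp: merge_def)
  have "card (insert j0 {0..<a}) = Suc a" using j0' a by simp
  then show "wt n (merge {0..<k} (ev a) c) > a"
    unfolding wt_def using card_mono[OF fin sub2] by simp
qed

lemma merge_basis:
  assumes kn: "k \<le> n" and x: "x \<in> asg {0..<k}" and c: "c \<in> asg ({0..<n} - {0..<k})"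
  shows "merge {0..<k} x c \<in> basis n"
  unfolding basis_iff
proof (intro allI impI)
  fix j assume "merge {0..<k} x c j"
  then have "(j < k \<and> x j) \<or> (\<not> j < k \<and> c j)" unfolding merge_def by (simp split: if_splits)
  then show "j < n" using x c kn unfolding asg_def by auto
qed

lemma triangle:
  assumes kn: "k \<le> n"
    and PX: "\<And>s t. s \<in> basis n \<Longrightarrow> t \<in> basis n \<Longrightarrow> X s t = X (ev (wt n s)) (ev (wt n t))"
    and PY: "\<And>s t. s \<in> basis n \<Longrightarrow> t \<in> basis n \<Longrightarrow> Y s t = Y (ev (wt n s)) (ev (wt n t))"
    and ZX: "\<And>s t. s \<in> basis n \<Longrightarrow> t \<in> basis n \<Longrightarrow> k < wt n s \<or> k < wt n t \<Longrightarrow> X s t = 0"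
    and ZY: "\<And>s t. s \<in> basis n \<Longrightarrow> t \<in> basis n \<Longrightarrow> k < wt n s \<or> k < wt n t \<Longrightarrow> Y s t = 0"
    and M: "same_marginal n {0..<k} X Y"
  shows "a \<le> n \<Longrightarrow> b \<le> n \<Longrightarrow> X (ev a) (ev b) = Y (ev a) (ev b)"
proof (induction "2 * n - (a + b)" arbitrary: a b rule: less_induct)
  case less
  have aB: "ev a \<in> basis n" and bB: "ev b \<in> basis n" using less.prems ev_basis by auto
  show ?case
  proof (cases "k < a \<or> k < b")
    case True
    then show ?thesis using ZX[OF aB bB] ZY[OF aB bB] ev_wt less.prems by simp
  next
    case False
    then have ak: "a \<le> k" and bk: "b \<le> k" by auto
    let ?S = "{0..<k}"
    let ?C = "asg ({0..<n} - ?S)"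
    define z where "z = (\<lambda>_::nat. False)"
    have xS: "ev a \<in> asg ?S" and yS: "ev b \<in> asg ?S" using ak bk unfolding asg_def ev_def by auto
    have fC: "finite ?C" by (simp add: finite_asg)
    have zC: "z \<in> ?C" by (simp add: z_def asg_def)
    have mz: "merge ?S (ev c) z = ev c" if "c \<le> k" for c
      using that by (intro ext) (simp add: merge_def z_def ev_def)
    have split: "ptrace n ?S Z (ev a) (ev b) = Z (ev a) (ev b) +
        (\<Sum>c\<in>?C - {z}. Z (merge ?S (ev a) c) (merge ?S (ev b) c))" for Z
    proof -
      have "ptrace n ?S Z (ev a) (ev b) = (\<Sum>c\<in>?C. Z (merge ?S (ev a) c) (merge ?S (ev b) c))"
        unfolding ptrace_def ..
      also have "\<dots> = Z (merge ?S (ev a) z) (merge ?S (ev b) z) +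
        (\<Sum>c\<in>?C - {z}. Z (merge ?S (ev a) c) (merge ?S (ev b) c))"
        by (rule sum.remove[OF fC zC])
      finally show ?thesis using mz[OF ak] mz[OF bk] by simp
    qed
    have rest: "(\<Sum>c\<in>?C - {z}. X (merge ?S (ev a) c) (merge ?S (ev b) c)) =
                (\<Sum>c\<in>?C - {z}. Y (merge ?S (ev a) c) (merge ?S (ev b) c))"
    proof (rule sum.cong[OF refl])
      fix c assume c: "c \<in> ?C - {z}"
      let ?u = "merge ?S (ev a) c" and ?v = "merge ?S (ev b) c"
      have cC: "c \<in> ?C" and cz: "c \<noteq> (\<lambda>_. False)" using c by (auto simp: z_def)
      have uB: "?u \<in> basis n" and vB: "?v \<in> basis n"
        using merge_basis[OF kn xS cC] merge_basis[OF kn yS cC] .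
      have w1: "wt n ?u > a" using wt_merge(2)[OF kn ak cC cz] .
      have w2: "wt n ?v \<ge> b" using wt_merge(1)[OF kn bk cC] .
      have le1: "wt n ?u \<le> n" and le2: "wt n ?v \<le> n" using wt_le by auto
      have lt: "2 * n - (wt n ?u + wt n ?v) < 2 * n - (a + b)" using w1 w2 le1 le2 by linarith
      have "X ?u ?v = X (ev (wt n ?u)) (ev (wt n ?v))" by (rule PX[OF uB vB])
      also have "\<dots> = Y (ev (wt n ?u)) (ev (wt n ?v))" by (rule less.hyps[OF lt le1 le2])
      also have "\<dots> = Y ?u ?v" by (rule PY[OF uB vB, symmetric])
      finally show "X ?u ?v = Y ?u ?v" .
    qed
    have "ptrace n ?S X (ev a) (ev b) = ptrace n ?S Y (ev a) (ev b)"
      using M xS yS unfolding same_marginal_def by blast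
    then show ?thesis unfolding split rest by simp
  qed
qed




theorem mainTheorem20:
  fixes n k :: nat and lam :: "nat \<Rightarrow> real" and istar :: nat
  assumes "1 \<le> k" and "k \<le> n"
    and "\<forall>i\<in>{0..k}. lam i \<ge> 0"
    and "(\<Sum>i\<in>{0..k}. lam i) = 1"
    and "istar \<in> {0..k}" and "even (k - istar)" and "lam istar = 0"
  shows "Lmin n (dicke_mix n k lam) \<le> k"
proof -
  let ?r = "dicke_mix n k lam"
  define SS where "SS = {S. S \<subseteq> {0..<n} \<and> card S \<le> k}"
  have k1: "1 \<le> k" and kn: "k \<le> n" using assms by auto
  have r: "istar \<le> k" "even (k - istar)" "lam istar = 0" using assms by auto
  have rd: "density n ?r" by (rule rho_density[OF kn assms(3,4)])
  have uniq: "X = ?r" if X: "X \<in> compatible n ?r SS" for X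
  proof -
    have d: "density n X" using X by (simp add: compatible_def)
    have marg: "same_marginal n T X ?r" if "T \<subseteq> {0..<n}" "card T \<le> k" for T
      using X that by (simp add: compatible_def SS_def)
    have ZX: "X s t = 0" if "s \<in> basis n" "t \<in> basis n" "k < wt n s \<or> k < wt n t" for s t
      by (rule support[OF r kn d marg that(1,2)]) (use that(3) in auto)
    have ZY: "?r s t = 0" if "s \<in> basis n" "t \<in> basis n" "k < wt n s \<or> k < wt n t" for s t
      using that by (auto simp: rho_eq)
    have PY: "?r s t = ?r (ev (wt n s)) (ev (wt n t))" if "s \<in> basis n" "t \<in> basis n" for s t
      by (rule rep_rho[OF that])
    have PX: "X s t = X (ev (wt n s)) (ev (wt n t))" if s: "s \<in> basis n" and t: "t \<in> basis n" for s t
    proof (cases "2 \<le> k")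
      case True then show ?thesis by (rule rep_X[OF d _ marg s t])
    next
      case False
      then have k1': "k = 1" using k1 by simp
      have esB: "ev (wt n s) \<in> basis n" and etB: "ev (wt n t) \<in> basis n" using ev_basis wt_le by blast+
      show ?thesis
      proof (cases "wt n s = 0 \<and> wt n t = 0")
        case True
        then have "s = ev 0" "t = ev 0" using wt0 s t by blast+
        then show ?thesis using True by simp
      next
        case False
        have ri: "istar = 1" using r k1' by (cases istar) auto
        have Z1: "X u v = 0" if "u \<in> basis n" "v \<in> basis n" "wt n u \<noteq> 0 \<or> wt n v \<noteq> 0" for u v
          by (rule support[OF r kn d marg that(1,2)]) (use that(3) ri k1' in auto)
        have "wt n (ev (wt n s)) \<noteq> 0 \<or> wt n (ev (wt n t)) \<noteq> 0" using False ev_wt[OF wt_le] by simp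
        then show ?thesis using Z1[OF s t] Z1[OF esB etB] False by simp
      qed
    qed
    have M: "same_marginal n {0..<k} X ?r" by (rule marg) (use kn in auto)
    have tri: "X (ev a) (ev b) = ?r (ev a) (ev b)" if "a \<le> n" "b \<le> n" for a b
      by (rule triangle[OF kn PX PY ZX ZY M that])
    show "X = ?r"
    proof (intro ext)
      fix s t
      show "X s t = ?r s t"
      proof (cases "s \<in> basis n \<and> t \<in> basis n")
        case True
        then show ?thesis using PX PY tri wt_le by simp
      next
        case False
        then show ?thesis using density_zero[OF d] density_zero[OF rd] by auto
      qed
    qed
  qed
  have "?r \<in> compatible n ?r SS" using rd by (simp add: compatible_def same_marginal_def)
  then have "compatible n ?r SS = {?r}" using uniq by blast
  then have "(\<forall>S\<in>SS. S \<subseteq> {0..<n}) \<and> determines n SS ?r \<and> (\<forall>S\<in>SS. card S \<le> k)"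
    by (simp add: determines_def SS_def)
  then have "\<exists>SS. (\<forall>S\<in>SS. S \<subseteq> {0..<n}) \<and> determines n SS ?r \<and> (\<forall>S\<in>SS. card S \<le> k)" by blast
  then show ?thesis unfolding Lmin_def by (rule Least_le)
qed


end
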